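(* Assume $\sigma_-<1/2$ and let $\rho=1-\frac{\sigma_-}{1-\sigma_-}$ and $C=\frac{2}{\rho(1-\rho)^3}$. Let $\theta\in\Theta$ with $K^\theta\ge2$ and, for a probability measure $\mu$ on $[K^\theta]$, consider under $\theta$ the process $(X_t,Y_t)_{t\ge0}$ where $X_0\sim\mu$, $(X_t)_{t\ge0}$ is a Markov chain with transition matrix $Q^\theta$, and conditionally on $(X_t)$ the $Y_t$ are independent with densities $y\mapsto\gamma^\theta_{X_t}(y-T^\theta_{X_t}(t))$. Then for all $t\ge1$, all probability measures $\mu,\nu$ on $[K^\theta]$, all $x\in[K^\theta]$ and all $y_0^t\in\mathbb R^{t+1}$, $$\big|\log p^\theta(y_t\mid y_0^{t-1},X_t\ne x,X_0\sim\mu)-\log p^\theta(y_t\mid y_0^{t-1},X_t\ne x,X_0\sim\nu)\big|\le C\rho^t,$$ where $p^\theta(y_t\mid y_0^{t-1},X_t\ne x,X_0\sim\mu)$ is the conditional density of $Y_t$ at $y_t$ given $Y_0^{t-1}=y_0^{t-1}$ and $X_t\ne x$ in this process.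
   Context: Fix integers $K\ge1$, $d\ge1$, $\sigma_-\in(0,1)$; $[K']=\{1,\dots,K'\}$; $\Delta_{K'}$ = probability vectors on $[K']$; $\Sigma^{\sigma_-}_{K'}$ = $K'\times K'$ stochastic matrices with all entries $\ge\sigma_-$; $\mathbb R_d[X]$ = real polynomials of degree $\le d$ on $\mathbb R_+$; $\Gamma$ a set of probability densities on $\mathbb R$. $\Theta=\bigcup_{K'=1}^K\{[K']\}\times\Delta_{K'}\times\Sigma^{\sigma_-}_{K'}\times\Gamma^{K'}\times(\mathbb R_d[X])^{K'}$, elements $\theta=(K^\theta,\pi^\theta,Q^\theta,\gamma^\theta,T^\theta)$. *)

theory Defs
  imports "HOL-Analysis.Analysis" "HOL-Computational_Algebra.Polynomial"
begin

definition prob_vec :: "nat \<Rightarrow> (nat \<Rightarrow> real) \<Rightarrow> bool" where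
  "prob_vec n p \<longleftrightarrow> (\<forall>i\<in>{1..n}. 0 \<le> p i) \<and> (\<Sum>i\<in>{1..n}. p i) = 1"

definition stoch_lb :: "nat \<Rightarrow> real \<Rightarrow> (nat \<Rightarrow> nat \<Rightarrow> real) \<Rightarrow> bool" where
  "stoch_lb n \<sigma> Q \<longleftrightarrow> (\<forall>i\<in>{1..n}. \<forall>j\<in>{1..n}. \<sigma> \<le> Q i j)
                       \<and> (\<forall>i\<in>{1..n}. (\<Sum>j\<in>{1..n}. Q i j) = 1)"

definition prob_density :: "(real \<Rightarrow> real) \<Rightarrow> bool" where
  "prob_density f \<longleftrightarrow> f \<in> borel_measurable lborel \<and> (\<forall>y. 0 \<le> f y)
                      \<and> (\<integral>\<^sup>+ y. ennreal (f y) \<partial>lborel) = 1"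

text \<open>Membership of theta = (K', pi, Q, gamma, T) in Theta.\<close>
definition in_Theta ::
  "nat \<Rightarrow> nat \<Rightarrow> real \<Rightarrow> (real \<Rightarrow> real) set \<Rightarrow>
   nat \<Rightarrow> (nat \<Rightarrow> real) \<Rightarrow> (nat \<Rightarrow> nat \<Rightarrow> real) \<Rightarrow> (nat \<Rightarrow> real \<Rightarrow> real) \<Rightarrow> (nat \<Rightarrow> real poly) \<Rightarrow> bool"
  where
  "in_Theta K d \<sigma> \<Gamma> K' \<pi> Q \<gamma> T \<longleftrightarrow>
     1 \<le> K' \<and> K' \<le> K \<and> prob_vec K' \<pi> \<and> stoch_lb K' \<sigma> Q
     \<and> (\<forall>k\<in>{1..K'}. \<gamma> k \<in> \<Gamma>) \<and> (\<forall>k\<in>{1..K'}. degree (T k) \<le> d)"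

definition emis :: "(nat \<Rightarrow> real \<Rightarrow> real) \<Rightarrow> (nat \<Rightarrow> real poly) \<Rightarrow> nat \<Rightarrow> nat \<Rightarrow> real \<Rightarrow> real" where
  "emis \<gamma> T s k y = \<gamma> k (y - poly (T k) (real s))"

text \<open>Joint density of (Y_0,...,Y_{m-1}) at (y 0,...,y (m-1)) together with the event
  X_t \<noteq> x, for the chain started from mu (sum over hidden paths x_0..x_t).\<close>
definition hmm_joint ::
  "nat \<Rightarrow> (nat \<Rightarrow> real) \<Rightarrow> (nat \<Rightarrow> nat \<Rightarrow> real) \<Rightarrow> (nat \<Rightarrow> real \<Rightarrow> real) \<Rightarrow> (nat \<Rightarrow> real poly)
   \<Rightarrow> nat \<Rightarrow> nat \<Rightarrow> nat \<Rightarrow> (nat \<Rightarrow> real) \<Rightarrow> real" where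
  "hmm_joint K' \<mu> Q \<gamma> T t m x y =
     (\<Sum>xs\<in>PiE {0..t} (\<lambda>_. {1..K'}).
        if xs t \<noteq> x then
          \<mu> (xs 0) * (\<Prod>s\<in>{1..t}. Q (xs (s - 1)) (xs s))
                   * (\<Prod>s\<in>{0..<m}. emis \<gamma> T s (xs s) (y s))
        else 0)"

text \<open>Conditional density p(y_t | y_0^{t-1}, X_t \<noteq> x, X_0 ~ mu).\<close>
definition hmm_cond ::
  "nat \<Rightarrow> (nat \<Rightarrow> real) \<Rightarrow> (nat \<Rightarrow> nat \<Rightarrow> real) \<Rightarrow> (nat \<Rightarrow> real \<Rightarrow> real) \<Rightarrow> (nat \<Rightarrow> real poly)
   \<Rightarrow> nat \<Rightarrow> nat \<Rightarrow> (nat \<Rightarrow> real) \<Rightarrow> real" where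
  "hmm_cond K' \<mu> Q \<gamma> T t x y =
     hmm_joint K' \<mu> Q \<gamma> T t (Suc t) x y / hmm_joint K' \<mu> Q \<gamma> T t t x y"

end

theory Submission
  imports Defs
begin


fun fw :: "nat \<Rightarrow> (nat\<Rightarrow>real) \<Rightarrow> (nat\<Rightarrow>nat\<Rightarrow>real) \<Rightarrow> (nat \<Rightarrow> nat \<Rightarrow> real) \<Rightarrow> nat \<Rightarrow> nat \<Rightarrow> real" where
  "fw K' \<mu> Q g 0 k = \<mu> k"
| "fw K' \<mu> Q g (Suc n) k = (\<Sum>j\<in>{1..K'}. fw K' \<mu> Q g n j * g n j * Q j k)"

lemma sum_PiE_insert:
  assumes "a \<notin> I" "finite I" "finite (S a)" "\<forall>i\<in>I. finite (S i)"
  shows "(\<Sum>xs\<in>PiE (insert a I) S. F xs) = (\<Sum>k\<in>S a. \<Sum>f\<in>PiE I S. F (f(a:=k)))"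
proof -
  have "(\<Sum>xs\<in>PiE (insert a I) S. F xs) = (\<Sum>p\<in>S a \<times> PiE I S. F ((\<lambda>(y, g). g(a := y)) p))"
    unfolding PiE_insert_eq by (subst sum.reindex[OF inj_combinator[OF assms(1)]]) (simp add: comp_def)
  also have "\<dots> = (\<Sum>k\<in>S a. \<Sum>f\<in>PiE I S. F (f(a:=k)))"
    by (simp add: sum.cartesian_product; intro sum.cong; auto)
  finally show ?thesis .
qed

lemma path_sum:
  "(\<Sum>xs\<in>PiE {0..n} (\<lambda>_. {1..K'}). h (xs n) * (\<mu> (xs 0) * (\<Prod>s\<in>{1..n}. Q (xs (s-1)) (xs s))
      * (\<Prod>s\<in>{0..<n}. g s (xs s)))) = (\<Sum>k\<in>{1..K'}. h k * fw K' \<mu> Q g n k)"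
proof (induction n arbitrary: h)
  case 0
  have e: "{0..0::nat} = insert 0 {}" by auto
  show ?case unfolding e by (subst sum_PiE_insert) auto
next
  case (Suc n)
  have e: "{0..Suc n} = insert (Suc n) {0..n}" by auto
  have key: "h ((f(Suc n := k)) (Suc n)) * (\<mu> ((f(Suc n := k)) 0) * (\<Prod>s\<in>{1..Suc n}. Q ((f(Suc n := k)) (s-1)) ((f(Suc n := k)) s))
      * (\<Prod>s\<in>{0..<Suc n}. g s ((f(Suc n := k)) s))) =
     h k * ((g n (f n) * Q (f n) k) * (\<mu> (f 0) * (\<Prod>s\<in>{1..n}. Q (f (s-1)) (f s))
      * (\<Prod>s\<in>{0..<n}. g s (f s))))" for k f
  proof -
    have p1: "(\<Prod>s\<in>{1..Suc n}. Q ((f(Suc n := k)) (s-1)) ((f(Suc n := k)) s))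
       = (\<Prod>s\<in>{1..n}. Q (f (s-1)) (f s)) * Q (f n) k"
      by (subst prod.cl_ivl_Suc) (auto intro!: prod.cong)
    have p2: "(\<Prod>s\<in>{0..<Suc n}. g s ((f(Suc n := k)) s)) = (\<Prod>s\<in>{0..<n}. g s (f s)) * g n (f n)"
      by (subst prod.atLeast0_lessThan_Suc) (auto intro!: prod.cong)
    show ?thesis unfolding p1 p2 by (simp add: mult_ac)
  qed
  have "(\<Sum>xs\<in>PiE {0..Suc n} (\<lambda>_. {1..K'}). h (xs (Suc n)) * (\<mu> (xs 0) * (\<Prod>s\<in>{1..Suc n}. Q (xs (s-1)) (xs s))
      * (\<Prod>s\<in>{0..<Suc n}. g s (xs s))))
    = (\<Sum>k\<in>{1..K'}. \<Sum>f\<in>PiE {0..n} (\<lambda>_. {1..K'}). h ((f(Suc n := k)) (Suc n)) * (\<mu> ((f(Suc n := k)) 0) * (\<Prod>s\<in>{1..Suc n}. Q ((f(Suc n := k)) (s-1)) ((f(Suc n := k)) s))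
      * (\<Prod>s\<in>{0..<Suc n}. g s ((f(Suc n := k)) s))))"
    unfolding e by (rule sum_PiE_insert) auto
  also have "\<dots> = (\<Sum>k\<in>{1..K'}. \<Sum>f\<in>PiE {0..n} (\<lambda>_. {1..K'}). h k * ((g n (f n) * Q (f n) k) * (\<mu> (f 0) * (\<Prod>s\<in>{1..n}. Q (f (s-1)) (f s))
      * (\<Prod>s\<in>{0..<n}. g s (f s)))))"
    by (intro sum.cong refl) (rule key)
  also have "\<dots> = (\<Sum>k\<in>{1..K'}. h k * (\<Sum>f\<in>PiE {0..n} (\<lambda>_. {1..K'}). (\<lambda>j. g n j * Q j k) (f n) * (\<mu> (f 0) * (\<Prod>s\<in>{1..n}. Q (f (s-1)) (f s))
      * (\<Prod>s\<in>{0..<n}. g s (f s)))))"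
    by (simp add: sum_distrib_left)
  also have "\<dots> = (\<Sum>k\<in>{1..K'}. h k * fw K' \<mu> Q g (Suc n) k)"
  proof (intro sum.cong refl arg_cong2[where f="(*)"])
    fix k
    show "(\<Sum>f\<in>PiE {0..n} (\<lambda>_. {1..K'}). (\<lambda>j. g n j * Q j k) (f n) * (\<mu> (f 0) * (\<Prod>s\<in>{1..n}. Q (f (s-1)) (f s))
      * (\<Prod>s\<in>{0..<n}. g s (f s)))) = fw K' \<mu> Q g (Suc n) k"
      using Suc.IH[of "\<lambda>j. g n j * Q j k"] by (simp add: mult_ac)
  qed
  finally show ?case .
qed

lemma step:
  fixes S :: "nat set" and u v g :: "nat \<Rightarrow> real" and Q :: "nat \<Rightarrow> nat \<Rightarrow> real"
  assumes fin: "finite S" and Qb: "\<forall>j\<in>S. \<forall>k\<in>S. \<sigma> \<le> Q j k \<and> Q j k \<le> 1-\<sigma>"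
    and s0: "0<\<sigma>" and s1: "\<sigma><1/2"
    and v0: "\<forall>j\<in>S. 0 \<le> v j" and g0: "\<forall>j\<in>S. 0 \<le> g j"
    and lo: "\<forall>j\<in>S. m * v j \<le> u j" and hi: "\<forall>j\<in>S. u j \<le> M * v j" and mM: "m \<le> M"
  shows "\<exists>m' M'. m \<le> m' \<and> m' \<le> M' \<and> M' - m' \<le> (1 - \<sigma>/(1-\<sigma>)) * (M - m) \<and>
     (\<forall>k\<in>S. m' * (\<Sum>j\<in>S. v j * g j * Q j k) \<le> (\<Sum>j\<in>S. u j * g j * Q j k)
            \<and> (\<Sum>j\<in>S. u j * g j * Q j k) \<le> M' * (\<Sum>j\<in>S. v j * g j * Q j k))"
proof -
  define V where "V = (\<Sum>j\<in>S. v j * g j)"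
  have V0: "0 \<le> V" unfolding V_def using v0 g0 by (auto intro!: sum_nonneg)
  show ?thesis
  proof (cases "V = 0")
    case True
    have vg: "v j * g j = 0" if "j \<in> S" for j
      using True unfolding V_def using sum_nonneg_eq_0_iff[OF fin, of "\<lambda>j. v j * g j"] v0 g0 that by auto
    have ug: "u j * g j = 0" if "j \<in> S" for j
    proof -
      have "m * (v j * g j) \<le> u j * g j" using lo g0 that mult_right_mono[of "m * v j" "u j" "g j"] by (auto simp: mult_ac)
      moreover have "u j * g j \<le> M * (v j * g j)" using hi g0 that mult_right_mono[of "u j" "M * v j" "g j"] by (auto simp: mult_ac)
      ultimately show ?thesis using vg[OF that] by simp
    qed
    have z1: "(\<Sum>j\<in>S. v j * g j * Q j k) = 0" for k using vg by (simp add: sum.neutral)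
    have z2: "(\<Sum>j\<in>S. u j * g j * Q j k) = 0" for k using ug by (simp add: sum.neutral)
    have "0 \<le> 1 - \<sigma>/(1-\<sigma>)" using s0 s1 by (simp add: field_simps)
    hence "0 \<le> (1 - \<sigma>/(1-\<sigma>)) * (M - m)" using mM by simp
    then show ?thesis
      by (intro exI[of _ m]) (simp add: z1 z2)
  next
    case False
    hence Vp: "0 < V" using V0 by simp
    define r where "r = \<sigma>/(1-\<sigma>)"
    have r0: "0 < r" and r1: "r < 1" and r\<sigma>: "r * (1-\<sigma>) = \<sigma>" using s0 s1 by (auto simp: r_def field_simps)
    define W1 where "W1 = (\<Sum>j\<in>S. (u j - m * v j) * g j)"
    define W2 where "W2 = (\<Sum>j\<in>S. (M * v j - u j) * g j)"
    have W1: "0 \<le> W1" unfolding W1_def using lo g0 by (auto intro!: sum_nonneg)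
    have W2: "0 \<le> W2" unfolding W2_def using hi g0 by (auto intro!: sum_nonneg)
    have W12: "W1 + W2 = (M - m) * V"
      unfolding W1_def W2_def V_def by (simp add: sum.distrib[symmetric] sum_distrib_left algebra_simps)
    define m' where "m' = m + r * (W1 / V)"
    define M' where "M' = M - r * (W2 / V)"
    have diff: "M' - m' = (1 - r) * (M - m)"
    proof -
      have e1: "M' - m' = (M - m) - r * (W1/V + W2/V)" unfolding m'_def M'_def by (simp add: algebra_simps)
      have e2: "W1/V + W2/V = M - m" using W12 Vp by (simp add: add_divide_distrib[symmetric])
      show ?thesis unfolding e1 e2 by (simp add: algebra_simps)
    qed
    have "\<forall>k\<in>S. m' * (\<Sum>j\<in>S. v j * g j * Q j k) \<le> (\<Sum>j\<in>S. u j * g j * Q j k)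
            \<and> (\<Sum>j\<in>S. u j * g j * Q j k) \<le> M' * (\<Sum>j\<in>S. v j * g j * Q j k)"
    proof
      fix k assume k: "k \<in> S"
      define vQ where "vQ = (\<Sum>j\<in>S. v j * g j * Q j k)"
      define uQ where "uQ = (\<Sum>j\<in>S. u j * g j * Q j k)"
      have vQ: "vQ \<le> (1-\<sigma>) * V" unfolding vQ_def V_def sum_distrib_left
        by (rule sum_mono) (use Qb v0 g0 k in \<open>auto simp: mult_ac intro!: mult_left_mono\<close>)
      have a: "uQ - m * vQ \<ge> \<sigma> * W1"
      proof -
        have "uQ - m * vQ = (\<Sum>j\<in>S. ((u j - m * v j) * g j) * Q j k)"
          unfolding uQ_def vQ_def by (simp add: sum_distrib_left sum_subtractf[symmetric] algebra_simps)
        also have "\<dots> \<ge> (\<Sum>j\<in>S. ((u j - m * v j) * g j) * \<sigma>)"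
          by (rule sum_mono) (use Qb lo g0 k in \<open>auto intro!: mult_left_mono\<close>)
        finally show ?thesis unfolding W1_def by (simp add: sum_distrib_left mult_ac)
      qed
      have b: "M * vQ - uQ \<ge> \<sigma> * W2"
      proof -
        have "M * vQ - uQ = (\<Sum>j\<in>S. ((M * v j - u j) * g j) * Q j k)"
          unfolding uQ_def vQ_def by (simp add: sum_distrib_left sum_subtractf[symmetric] algebra_simps)
        also have "\<dots> \<ge> (\<Sum>j\<in>S. ((M * v j - u j) * g j) * \<sigma>)"
          by (rule sum_mono) (use Qb hi g0 k in \<open>auto intro!: mult_left_mono\<close>)
        finally show ?thesis unfolding W2_def by (simp add: sum_distrib_left mult_ac)
      qed
      have c1: "r * (W1 / V) * vQ \<le> \<sigma> * W1"
      proof -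
        have "r * (W1 / V) * vQ \<le> r * (W1 / V) * ((1-\<sigma>) * V)"
          by (rule mult_left_mono[OF vQ]) (use r0 W1 Vp in auto)
        also have "\<dots> = (r * (1-\<sigma>)) * W1" using Vp by (simp add: field_simps)
        also have "\<dots> = \<sigma> * W1" by (simp only: r\<sigma>)
        finally show ?thesis .
      qed
      have c2: "r * (W2 / V) * vQ \<le> \<sigma> * W2"
      proof -
        have "r * (W2 / V) * vQ \<le> r * (W2 / V) * ((1-\<sigma>) * V)"
          by (rule mult_left_mono[OF vQ]) (use r0 W2 Vp in auto)
        also have "\<dots> = (r * (1-\<sigma>)) * W2" using Vp by (simp add: field_simps)
        also have "\<dots> = \<sigma> * W2" by (simp only: r\<sigma>)
        finally show ?thesis .
      qed
      show "m' * vQ \<le> uQ \<and> uQ \<le> M' * vQ"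
        using a b c1 c2 unfolding m'_def M'_def by (simp add: algebra_simps)
    qed
    moreover have "m \<le> m'" unfolding m'_def using r0 W1 Vp by simp
    moreover have "m' \<le> M'" using diff r1 mM by (smt (verit) mult_nonneg_nonneg)
    ultimately show ?thesis using diff unfolding r_def by (intro exI[of _ m'] exI[of _ M']) simp
  qed
qed


lemma fw_nonneg:
  assumes "\<forall>j\<in>{1..K'}. 0 \<le> \<mu> j" "\<forall>s. \<forall>j\<in>{1..K'}. 0 \<le> g s j" "\<forall>j\<in>{1..K'}. \<forall>k\<in>{1..K'}. 0 \<le> Q j k"
  shows "k \<in> {1..K'} \<Longrightarrow> 0 \<le> fw K' \<mu> Q g n k"
proof (induction n arbitrary: k)
  case 0 then show ?case using assms by simp
next
  case (Suc n) then show ?case using assms by (auto intro!: sum_nonneg mult_nonneg_nonneg)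
qed

lemma iter:
  assumes Qb: "\<forall>j\<in>{1..K'}. \<forall>k\<in>{1..K'}. \<sigma> \<le> Q j k \<and> Q j k \<le> 1-\<sigma>"
    and s0: "0<\<sigma>" and s1: "\<sigma><1/2"
    and G0: "\<forall>s. \<forall>j\<in>{1..K'}. 0 \<le> g s j"
    and v0: "\<forall>j\<in>{1..K'}. 0 \<le> \<nu> j"
    and mM: "m1 \<le> M1"
    and base: "\<forall>k\<in>{1..K'}. m1 * fw K' \<nu> Q g 1 k \<le> fw K' \<mu> Q g 1 k \<and> fw K' \<mu> Q g 1 k \<le> M1 * fw K' \<nu> Q g 1 k"
  shows "\<exists>m M. m1 \<le> m \<and> m \<le> M \<and> M - m \<le> (1 - \<sigma>/(1-\<sigma>))^n * (M1 - m1) \<and>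
     (\<forall>k\<in>{1..K'}. m * fw K' \<nu> Q g (Suc n) k \<le> fw K' \<mu> Q g (Suc n) k \<and> fw K' \<mu> Q g (Suc n) k \<le> M * fw K' \<nu> Q g (Suc n) k)"
proof (induction n)
  case 0 then show ?case using mM base by (intro exI[of _ m1] exI[of _ M1]) simp
next
  case (Suc n)
  then obtain m M where mM1: "m1 \<le> m" "m \<le> M" "M - m \<le> (1 - \<sigma>/(1-\<sigma>))^n * (M1 - m1)"
    and b: "\<forall>k\<in>{1..K'}. m * fw K' \<nu> Q g (Suc n) k \<le> fw K' \<mu> Q g (Suc n) k \<and> fw K' \<mu> Q g (Suc n) k \<le> M * fw K' \<nu> Q g (Suc n) k"
    by blast
  have Q0: "\<forall>j\<in>{1..K'}. \<forall>k\<in>{1..K'}. 0 \<le> Q j k" using Qb s0 by (meson less_le_trans order.strict_implies_order)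
  have nn: "\<forall>j\<in>{1..K'}. 0 \<le> fw K' \<nu> Q g (Suc n) j" using fw_nonneg[OF v0 G0 Q0] by blast
  obtain m' M' where st: "m \<le> m'" "m' \<le> M'" "M' - m' \<le> (1 - \<sigma>/(1-\<sigma>)) * (M - m)"
    "\<forall>k\<in>{1..K'}. m' * (\<Sum>j\<in>{1..K'}. fw K' \<nu> Q g (Suc n) j * g (Suc n) j * Q j k) \<le> (\<Sum>j\<in>{1..K'}. fw K' \<mu> Q g (Suc n) j * g (Suc n) j * Q j k)
            \<and> (\<Sum>j\<in>{1..K'}. fw K' \<mu> Q g (Suc n) j * g (Suc n) j * Q j k) \<le> M' * (\<Sum>j\<in>{1..K'}. fw K' \<nu> Q g (Suc n) j * g (Suc n) j * Q j k)"
    using step[of "{1..K'}" \<sigma> Q "fw K' \<nu> Q g (Suc n)" "g (Suc n)" m "fw K' \<mu> Q g (Suc n)" M] Qb s0 s1 nn G0 b mM1(2)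
    by auto
  have rho: "0 \<le> 1 - \<sigma>/(1-\<sigma>)" using s0 s1 by (simp add: field_simps)
  have "M' - m' \<le> (1 - \<sigma>/(1-\<sigma>)) * ((1 - \<sigma>/(1-\<sigma>))^n * (M1 - m1))"
    using st(3) mult_left_mono[OF mM1(3) rho] by linarith
  then show ?case using st mM1 by (intro exI[of _ m'] exI[of _ M']) (auto simp: mult_ac)
qed

lemma joint_eq:
  "hmm_joint K' \<mu> Q \<gamma> T t t x y = (\<Sum>k\<in>{1..K'}. (if k \<noteq> x then 1 else 0) * fw K' \<mu> Q (\<lambda>s j. emis \<gamma> T s j (y s)) t k)"
  "hmm_joint K' \<mu> Q \<gamma> T t (Suc t) x y = (\<Sum>k\<in>{1..K'}. (if k \<noteq> x then emis \<gamma> T t k (y t) else 0) * fw K' \<mu> Q (\<lambda>s j. emis \<gamma> T s j (y s)) t k)"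
   unfolding hmm_joint_def path_sum[symmetric] by (auto intro!: sum.cong)



lemma fw_zero:
  assumes "\<forall>k. fw K' \<mu> Q g 1 k = 0"
  shows "fw K' \<mu> Q g (Suc n) k = 0"
proof (induction n arbitrary: k)
  case 0 then show ?case using assms by simp
next
  case (Suc n) then show ?case by simp
qed

lemma sum_bounds:
  fixes S :: "nat set" and h u v :: "nat \<Rightarrow> real" and m M :: real
  assumes "finite S" "\<forall>k\<in>S. 0 \<le> h k \<and> m * v k \<le> u k \<and> u k \<le> M * v k"
  shows "m * (\<Sum>k\<in>S. h k * v k) \<le> (\<Sum>k\<in>S. h k * u k) \<and> (\<Sum>k\<in>S. h k * u k) \<le> M * (\<Sum>k\<in>S. h k * v k)"
proof -
  have 1: "m * (h k * v k) \<le> h k * u k" if "k \<in> S" for k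
    using assms(2) that mult_left_mono[of "m * v k" "u k" "h k"] by (simp add: mult_ac)
  have 2: "h k * u k \<le> M * (h k * v k)" if "k \<in> S" for k
    using assms(2) that mult_left_mono[of "u k" "M * v k" "h k"] by (simp add: mult_ac)
  show ?thesis using sum_mono[of S, OF 1] sum_mono[of S, OF 2] by (simp add: sum_distrib_left)
qed

lemma final_ineq:
  fixes a b a' b' m M :: real
  assumes "0<m" "m \<le> M" "0<a" "0<b" "0 \<le> b'" "m*b \<le> a" "a \<le> M*b" "m*b' \<le> a'" "a' \<le> M*b'"
  shows "\<bar>ln (a'/a) - ln (b'/b)\<bar> \<le> (M-m)/m"
proof (cases "b' = 0")
  case True
  then have "a' = 0" using assms(8,9) by simp
  then show ?thesis using True assms by simp
next
  case False
  hence bp: "0 < b'" using assms by simp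
  have "0 < m * b'" using assms bp by simp
  hence ap: "0 < a'" using assms(8) by linarith
  define z where "z = (a'/a)/(b'/b)"
  have zp: "0 < z" unfolding z_def using ap bp assms by simp
  have d: "ln (a'/a) - ln (b'/b) = ln z" unfolding z_def using ln_div[of "a'/a" "b'/b"] ap bp assms by simp
  have b_le: "b \<le> a/m" using assms by (simp add: field_simps)
  have "a' * b \<le> (M * b') * (a/m)" by (rule mult_mono) (use assms b_le in auto)
  hence z1: "z \<le> M/m" unfolding z_def using assms ap bp by (simp add: field_simps)
  have b'_le: "b' \<le> a'/m" using assms by (simp add: field_simps)
  have "b' * a \<le> (a'/m) * (M * b)" by (rule mult_mono) (use assms b'_le ap in auto)
  hence z2: "1/z \<le> M/m" unfolding z_def using assms ap bp by (simp add: field_simps)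
  have "ln z \<le> z - 1" using zp by (rule ln_le_minus_one)
  moreover have "ln (1/z) \<le> 1/z - 1" using zp by (intro ln_le_minus_one) simp
  moreover have "ln (1/z) = - ln z" using zp by (simp add: ln_div)
  moreover have "M/m - 1 = (M-m)/m" using assms by (simp add: field_simps)
  ultimately show ?thesis unfolding d using z1 z2 by linarith
qed

theorem lemma15:
  fixes K d :: nat and \<sigma> :: real and \<Gamma> :: "(real \<Rightarrow> real) set"
    and K' :: nat and \<pi> :: "nat \<Rightarrow> real" and Q :: "nat \<Rightarrow> nat \<Rightarrow> real"
    and \<gamma> :: "nat \<Rightarrow> real \<Rightarrow> real" and T :: "nat \<Rightarrow> real poly"
    and t x :: nat and \<mu> \<nu> y :: "nat \<Rightarrow> real"
  assumes "1 \<le> K" "1 \<le> d" "0 < \<sigma>" "\<sigma> < 1"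
    and "\<forall>g\<in>\<Gamma>. prob_density g"
    and "\<sigma> < 1/2"
    and "in_Theta K d \<sigma> \<Gamma> K' \<pi> Q \<gamma> T"
    and "2 \<le> K'"
    and "1 \<le> t"
    and "prob_vec K' \<mu>" "prob_vec K' \<nu>"
    and "x \<in> {1..K'}"
    and "0 < hmm_joint K' \<mu> Q \<gamma> T t t x y" "0 < hmm_joint K' \<nu> Q \<gamma> T t t x y"
  shows "\<bar>ln (hmm_cond K' \<mu> Q \<gamma> T t x y) - ln (hmm_cond K' \<nu> Q \<gamma> T t x y)\<bar>
           \<le> (2 / ((1 - \<sigma>/(1-\<sigma>)) * (1 - (1 - \<sigma>/(1-\<sigma>)))^3)) * (1 - \<sigma>/(1-\<sigma>)) ^ t"
  proof -
  let ?S = "{1..K'}"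
  define G where "G = (\<lambda>s j. emis \<gamma> T s j (y s))"
  define r where "r = \<sigma>/(1-\<sigma>)"
  define \<rho> where "\<rho> = 1 - r"
  have r0: "0 < r" and r1: "r < 1" and r\<sigma>: "r * (1-\<sigma>) = \<sigma>" using assms(3,6) by (auto simp: r_def field_simps)
  have \<rho>0: "0 < \<rho>" using r1 by (simp add: \<rho>_def)
  have th: "stoch_lb K' \<sigma> Q" "\<forall>k\<in>?S. \<gamma> k \<in> \<Gamma>" using assms(7) unfolding in_Theta_def by auto
  have Qlo: "\<forall>j\<in>?S. \<forall>k\<in>?S. \<sigma> \<le> Q j k" using th(1) unfolding stoch_lb_def by auto
  have Qrow: "\<forall>j\<in>?S. (\<Sum>k\<in>?S. Q j k) = 1" using th(1) unfolding stoch_lb_def by auto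
  have Qb: "\<forall>j\<in>?S. \<forall>k\<in>?S. \<sigma> \<le> Q j k \<and> Q j k \<le> 1-\<sigma>"
  proof (intro ballI conjI)
    fix j k assume j: "j \<in> ?S" and k: "k \<in> ?S"
    show "\<sigma> \<le> Q j k" using Qlo j k by auto
    define k' where "k' = (if k = 1 then 2 else (1::nat))"
    have k': "k' \<in> ?S - {k}" using k assms(8) by (auto simp: k'_def)
    have "(\<Sum>i\<in>?S. Q j i) = Q j k + (\<Sum>i\<in>?S - {k}. Q j i)" using k by (simp add: sum.remove)
    moreover have "Q j k' \<le> (\<Sum>i\<in>?S - {k}. Q j i)"
      by (rule member_le_sum) (use k' Qlo j assms(3) in \<open>auto intro: order.trans[OF less_imp_le]\<close>)
    ultimately show "Q j k \<le> 1 - \<sigma>" using Qrow j Qlo k' by force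
  qed
  have Q0: "\<forall>j\<in>?S. \<forall>k\<in>?S. 0 \<le> Q j k" using Qlo assms(3) by (meson less_le_trans order.strict_implies_order)
  have G0: "\<forall>s. \<forall>j\<in>?S. 0 \<le> G s j"
    using th(2) assms(5) unfolding G_def emis_def prob_density_def by blast
  have \<mu>0: "\<forall>j\<in>?S. 0 \<le> \<mu> j" using assms(10) unfolding prob_vec_def by auto
  have \<nu>0: "\<forall>j\<in>?S. 0 \<le> \<nu> j" using assms(11) unfolding prob_vec_def by auto
  have tS: "t = Suc (t - 1)" using assms(9) by simp
  have J: "hmm_joint K' p Q \<gamma> T t t x y = (\<Sum>k\<in>?S. (if k \<noteq> x then 1 else 0) * fw K' p Q G t k)"
     "hmm_joint K' p Q \<gamma> T t (Suc t) x y = (\<Sum>k\<in>?S. (if k \<noteq> x then G t k else 0) * fw K' p Q G t k)" for p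
    unfolding G_def by (rule joint_eq)+
  have first: "\<sigma> * (\<Sum>j\<in>?S. p j * G 0 j) \<le> fw K' p Q G 1 k \<and> fw K' p Q G 1 k \<le> (1-\<sigma>) * (\<Sum>j\<in>?S. p j * G 0 j)"
    if p0: "\<forall>j\<in>?S. 0 \<le> p j" and k: "k \<in> ?S" for p k
  proof -
    have e: "fw K' p Q G 1 k = (\<Sum>j\<in>?S. (p j * G 0 j) * Q j k)" by simp
    have nn: "0 \<le> p j * G 0 j" if "j \<in> ?S" for j using p0 G0 that by simp
    show ?thesis unfolding e sum_distrib_left
      by (intro conjI sum_mono) (use nn Qb k in \<open>auto simp: mult.commute intro!: mult_right_mono\<close>)
  qed
  have Spos: "0 < (\<Sum>j\<in>?S. p j * G 0 j)" if p0: "\<forall>j\<in>?S. 0 \<le> p j" and jp: "0 < hmm_joint K' p Q \<gamma> T t t x y" for p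
  proof (rule ccontr)
    assume "\<not> ?thesis"
    moreover have "0 \<le> (\<Sum>j\<in>?S. p j * G 0 j)" using p0 G0 by (auto intro!: sum_nonneg)
    ultimately have z: "(\<Sum>j\<in>?S. p j * G 0 j) = 0" by simp
    have "p j * G 0 j = 0" if "j \<in> ?S" for j
      using z sum_nonneg_eq_0_iff[of ?S "\<lambda>j. p j * G 0 j"] p0 G0 that by auto
    hence "\<forall>k. fw K' p Q G 1 k = 0" by (simp add: sum.neutral)
    hence "fw K' p Q G t k = 0" for k by (subst tS, rule fw_zero)
    hence "hmm_joint K' p Q \<gamma> T t t x y = 0" unfolding J by simp
    then show False using jp by simp
  qed
  define S\<mu> where "S\<mu> = (\<Sum>j\<in>?S. \<mu> j * G 0 j)"
  define S\<nu> where "S\<nu> = (\<Sum>j\<in>?S. \<nu> j * G 0 j)"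
  have S\<mu>: "0 < S\<mu>" unfolding S\<mu>_def using Spos \<mu>0 assms(13) by blast
  have S\<nu>: "0 < S\<nu>" unfolding S\<nu>_def using Spos \<nu>0 assms(14) by blast
  define c where "c = S\<mu> / S\<nu>"
  have c0: "0 < c" using S\<mu> S\<nu> by (simp add: c_def)
  define m1 where "m1 = r * c"
  define M1 where "M1 = c / r"
  have m1p: "0 < m1" using r0 c0 by (simp add: m1_def)
  have m1M1: "m1 \<le> M1"
  proof -
    have "r * c \<le> 1 * c" using r1 c0 by (intro mult_right_mono) auto
    moreover have "c \<le> c / r" using r0 r1 c0 by (simp add: le_divide_eq)
    ultimately show ?thesis unfolding m1_def M1_def by simp
  qed
  have base: "\<forall>k\<in>?S. m1 * fw K' \<nu> Q G 1 k \<le> fw K' \<mu> Q G 1 k \<and> fw K' \<mu> Q G 1 k \<le> M1 * fw K' \<nu> Q G 1 k"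
  proof
    fix k assume k: "k \<in> ?S"
    note f\<mu> = first[OF \<mu>0 k, folded S\<mu>_def] and f\<nu> = first[OF \<nu>0 k, folded S\<nu>_def]
    have "m1 * fw K' \<nu> Q G 1 k \<le> m1 * ((1-\<sigma>) * S\<nu>)" using f\<nu> m1p by (intro mult_left_mono) auto
    also have "\<dots> = (r * (1-\<sigma>)) * (c * S\<nu>)" unfolding m1_def by (simp add: mult_ac)
    also have "\<dots> = \<sigma> * S\<mu>" using S\<nu> unfolding r\<sigma> by (simp add: c_def)
    finally have 1: "m1 * fw K' \<nu> Q G 1 k \<le> fw K' \<mu> Q G 1 k" using f\<mu> by linarith
    have "M1 * (\<sigma> * S\<nu>) \<le> M1 * fw K' \<nu> Q G 1 k" using f\<nu> m1p m1M1 by (intro mult_left_mono) auto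
    moreover have "M1 * (\<sigma> * S\<nu>) = (1-\<sigma>) * S\<mu>"
    proof -
      have "M1 * (\<sigma> * S\<nu>) = c * S\<nu> * (\<sigma> / r)" unfolding M1_def by (simp add: field_simps)
      also have "\<sigma> / r = 1 - \<sigma>" using r\<sigma> r0 by (simp add: field_simps)
      also have "c * S\<nu> = S\<mu>" using S\<nu> by (simp add: c_def)
      finally show ?thesis by simp
    qed
    ultimately have 2: "fw K' \<mu> Q G 1 k \<le> M1 * fw K' \<nu> Q G 1 k" using f\<mu> by linarith
    show "m1 * fw K' \<nu> Q G 1 k \<le> fw K' \<mu> Q G 1 k \<and> fw K' \<mu> Q G 1 k \<le> M1 * fw K' \<nu> Q G 1 k" using 1 2 by simp
  qed
  obtain m M where mM: "m1 \<le> m" "m \<le> M" "M - m \<le> \<rho>^(t-1) * (M1 - m1)"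
    and bd: "\<forall>k\<in>?S. m * fw K' \<nu> Q G t k \<le> fw K' \<mu> Q G t k \<and> fw K' \<mu> Q G t k \<le> M * fw K' \<nu> Q G t k"
    using iter[OF Qb assms(3,6) G0 \<nu>0 m1M1 base, of "t-1"] tS unfolding \<rho>_def r_def by auto
  have mp: "0 < m" using m1p mM by simp
  have fnn: "\<forall>k\<in>?S. 0 \<le> fw K' \<nu> Q G t k" using fw_nonneg[OF \<nu>0 G0 Q0] by blast
  define h1 where "h1 = (\<lambda>k. if k \<noteq> x then (1::real) else 0)"
  define h2 where "h2 = (\<lambda>k. if k \<noteq> x then G t k else 0)"
  have J': "hmm_joint K' p Q \<gamma> T t t x y = (\<Sum>k\<in>?S. h1 k * fw K' p Q G t k)"
     "hmm_joint K' p Q \<gamma> T t (Suc t) x y = (\<Sum>k\<in>?S. h2 k * fw K' p Q G t k)" for p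
    unfolding h1_def h2_def by (rule J)+
  have B1: "m * hmm_joint K' \<nu> Q \<gamma> T t t x y \<le> hmm_joint K' \<mu> Q \<gamma> T t t x y \<and>
            hmm_joint K' \<mu> Q \<gamma> T t t x y \<le> M * hmm_joint K' \<nu> Q \<gamma> T t t x y"
    unfolding J' by (rule sum_bounds) (use bd in \<open>auto simp: h1_def\<close>)
  have B2: "m * hmm_joint K' \<nu> Q \<gamma> T t (Suc t) x y \<le> hmm_joint K' \<mu> Q \<gamma> T t (Suc t) x y \<and>
            hmm_joint K' \<mu> Q \<gamma> T t (Suc t) x y \<le> M * hmm_joint K' \<nu> Q \<gamma> T t (Suc t) x y"
    unfolding J' by (rule sum_bounds) (use bd G0 in \<open>auto simp: h2_def\<close>)
  have b'0: "0 \<le> hmm_joint K' \<nu> Q \<gamma> T t (Suc t) x y"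
    unfolding J' using fnn G0 by (auto simp: h2_def intro!: sum_nonneg)
  have L: "\<bar>ln (hmm_cond K' \<mu> Q \<gamma> T t x y) - ln (hmm_cond K' \<nu> Q \<gamma> T t x y)\<bar> \<le> (M - m)/m"
    unfolding hmm_cond_def using B1 B2 b'0 mp mM(2) assms(13,14) by (intro final_ineq) auto
  have "(M - m)/m \<le> (M - m)/m1" using mM m1p by (intro divide_left_mono) auto
  also have "\<dots> \<le> (\<rho>^(t-1) * (M1 - m1))/m1" using mM(3) m1p by (intro divide_right_mono) auto
  also have "\<dots> = \<rho>^(t-1) * (1/r^2 - 1)"
    unfolding m1_def M1_def using r0 c0 by (simp add: field_simps power2_eq_square)
  also have "\<dots> \<le> \<rho>^(t-1) * (2/r^3)"
  proof (rule mult_left_mono)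
    have "1/r^2 \<le> 1/r^3" using r0 r1 by (intro divide_left_mono) (auto simp: power_decreasing)
    also have "\<dots> \<le> 2/r^3" using r0 by (intro divide_right_mono) auto
    finally show "1/r^2 - 1 \<le> 2/r^3" by simp
  qed (use \<rho>0 in simp)
  also have "\<dots> = (2 / (\<rho> * (1 - \<rho>)^3)) * \<rho>^t"
  proof -
    have e: "\<rho>^t = \<rho> * \<rho>^(t-1)" using assms(9) by (cases t) auto
    have e2: "1 - \<rho> = r" by (simp add: \<rho>_def)
    show ?thesis unfolding e e2 using \<rho>0 r0 by (simp add: field_simps)
  qed
  finally show ?thesis using L unfolding \<rho>_def r_def by linarith
qed
end
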